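(* Consider the following model. Fix $n\ge1$, $\mu\in\mathbb R^n$, $n\times n$ matrices $A,B,C$, a positive definite $\Sigma_0$ and positive initial prices. Let $$R_{t+1}=\mu+Z_{t+1},\qquad \Sigma_{t+1}=CC^\top+A\Sigma_tA^\top+BZ_{t+1}Z_{t+1}^\top B^\top,$$ where conditionally on the past $Z_{t+1}$ has mean $0$ and covariance $\Sigma_t$; prices $S^i_{t+1}=h(S^i_t,R^i_{t+1})$, $\vec S_t=(S^1_t,\dots,S^n_t)^\top$, $\Psi_t=\mathrm{diag}(\vec S_t)$, $P_t=\Psi_t\Sigma_t\Psi_t$. Let $\gamma>0$, $\epsilon>0$, $q:\mathbb R^n\times\mathbb R^{n\times n}\to\mathbb R^+$, and $\widetilde P_t=\frac{\gamma}{\epsilon q(\vec S_t,P_t)}P_t$. Assume: (i) $C$ has full rank, so $c:=\inf_{\|v\|=1}v^\top CC^\top v>0$; (ii) $\|h\|_\infty=\sup_{s,r}|h(s,r)|<\infty$ and there is $\underline s>0$ with $\inf_{s,r}h(s,r)\ge\underline s$; (iii) there is $\chi<\infty$ with $1\le q(s,p)\le\chi$ for all $(s,p)$. Then for all $t$, $$\left\|\frac{1}{\epsilon q(\vec S_t,P_t)}\Psi_t^{-1}\right\|\le\frac{1}{\epsilon\underline s},\qquad \left\|\left(I+\widetilde P_t\Psi_t^{-1}\right)^{-1}P_t\right\|\le\frac{\epsilon}{\gamma}\chi\|h\|_\infty.$$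
   Context: $\|\cdot\|$ denotes the operator norm induced by the Euclidean norm. $\mathrm{diag}(\vec S_t)$ is the diagonal matrix with the entries of $\vec S_t$ on its diagonal. *)

theory Defs
  imports "HOL-Analysis.Analysis"
begin

definition opnorm :: "real^'n^'n \<Rightarrow> real" where
  "opnorm M = onorm (\<lambda>x. M *v x)"

definition diag_mat :: "real^'n \<Rightarrow> real^'n^'n" where
  "diag_mat v = (\<chi> i j. if i = j then v $ i else 0)"

definition outer :: "real^'n \<Rightarrow> real^'n \<Rightarrow> real^'n^'n" where
  "outer z w = (\<chi> i j. z $ i * w $ j)"

definition pos_def :: "real^'n^'n \<Rightarrow> bool" where
  "pos_def M \<longleftrightarrow> transpose M = M \<and> (\<forall>v. v \<noteq> 0 \<longrightarrow> v \<bullet> (M *v v) > 0)"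

definition sup_norm2 :: "(real \<Rightarrow> real \<Rightarrow> real) \<Rightarrow> real" where
  "sup_norm2 h = (SUP p\<in>UNIV. \<bar>h (fst p) (snd p)\<bar>)"

end

theory Submission
  imports Defs
begin

lemma if_mult0: "(if P then (a::real) else 0) * b = (if P then a * b else 0)" by simp

lemma diag_mv: "diag_mat a *v x = (\<chi> i. a$i * x$i)"
  by (simp add: diag_mat_def matrix_vector_mult_def vec_eq_iff if_mult0)

lemma diag_mm: "diag_mat a ** diag_mat b = diag_mat (\<chi> i. a$i * b$i)"
  by (simp add: diag_mat_def matrix_matrix_mult_def vec_eq_iff if_mult0)

lemma inner_vec_sum: "(x::real^'n) \<bullet> y = (\<Sum>i\<in>UNIV. x$i * y$i)"
  by (simp add: inner_vec_def)

lemma norm_sq_sum: "norm (x::real^'n) ^ 2 = (\<Sum>i\<in>UNIV. (x$i)^2)"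
  by (simp only: power2_norm_eq_inner) (simp add: inner_vec_sum power2_eq_square)

lemma diag_norm_le:
  assumes "\<And>i. \<bar>a$i\<bar> \<le> b" "b \<ge> 0"
  shows "norm (diag_mat a *v x) \<le> b * norm (x::real^'n)"
proof (rule power2_le_imp_le)
  have "norm (diag_mat a *v x) ^ 2 = (\<Sum>i\<in>UNIV. (a$i)^2 * (x$i)^2)"
    by (simp add: norm_sq_sum diag_mv power_mult_distrib)
  also have "\<dots> \<le> (\<Sum>i\<in>UNIV. b^2 * (x$i)^2)"
  proof (rule sum_mono)
    fix i
    have "(a$i)^2 \<le> b^2" using assms(1)[of i] assms(2)
      by (metis abs_le_square_iff abs_of_nonneg)
    then show "(a$i)^2 * (x$i)^2 \<le> b^2 * (x$i)^2" by (simp add: mult_right_mono)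
  qed
  also have "\<dots> = (b * norm x)^2" by (simp add: norm_sq_sum sum_distrib_left power_mult_distrib)
  finally show "norm (diag_mat a *v x) ^ 2 \<le> (b * norm x)^2" .
qed (use assms in auto)

lemma outer_mv: "outer z z *v y = (z \<bullet> y) *\<^sub>R z"
  by (simp add: outer_def matrix_vector_mult_def vec_eq_iff inner_vec_sum sum_distrib_left mult_ac)

lemma psd_step:
  fixes M A B C :: "real^'n^'n"
  assumes "\<forall>z. z \<bullet> (M *v z) \<ge> 0"
  shows "\<forall>z. z \<bullet> ((C ** transpose C + A ** M ** transpose A + B ** outer Z Z ** transpose B) *v z) \<ge> 0"
proof
  fix z :: "real^'n"
  have 1: "z \<bullet> ((C ** transpose C) *v z) = (z v* C) \<bullet> (z v* C)"
    by (metis dot_lmul_matrix matrix_vector_mul_assoc transpose_matrix_vector)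
  have 2: "z \<bullet> ((A ** M ** transpose A) *v z) = (z v* A) \<bullet> (M *v (z v* A))"
    by (metis dot_lmul_matrix matrix_vector_mul_assoc transpose_matrix_vector)
  have 3: "z \<bullet> ((B ** outer Z Z ** transpose B) *v z) = (Z \<bullet> (z v* B)) ^ 2"
  proof -
    have "z \<bullet> ((B ** outer Z Z ** transpose B) *v z) = z \<bullet> (B *v ((Z \<bullet> (z v* B)) *\<^sub>R Z))"
      by (metis matrix_vector_mul_assoc outer_mv transpose_matrix_vector)
    also have "\<dots> = (Z \<bullet> (z v* B)) * ((z v* B) \<bullet> Z)"
      by (simp add: dot_lmul_matrix matrix_vector_mult_scaleR)
    finally show ?thesis by (simp add: power2_eq_square inner_commute)
  qed
  show "z \<bullet> ((C ** transpose C + A ** M ** transpose A + B ** outer Z Z ** transpose B) *v z) \<ge> 0"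
    using 1 2 3 assms by (simp add: matrix_vector_mult_add_rdistrib inner_add_right)
qed

lemma pointwise_key:
  fixes s x z y k :: real
  assumes "s > 0" "s * x = z + k * s * y"
  shows "s * x^2 \<ge> 2 * k * z * y + k^2 * s * y^2"
proof -
  have "s * (s * x^2) = (s * x)^2" by (simp add: power2_eq_square)
  also have "\<dots> = (z + k * s * y)^2" using assms(2) by simp
  also have "\<dots> \<ge> s * (2 * k * z * y + k^2 * s * y^2)"
    by (simp add: power2_eq_square algebra_simps)
  finally show ?thesis using assms(1) by simp
qed

lemma key:
  fixes s x w :: "real^'n" and Sg :: "real^'n^'n"
  assumes spos: "\<forall>i. 0 < s$i" and sH: "\<forall>i. s$i \<le> H"
    and psd: "\<forall>z. z \<bullet> (Sg *v z) \<ge> 0" and k: "k > 0"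
    and eq: "w + k *\<^sub>R (diag_mat s *v (Sg *v w)) = diag_mat s *v (Sg *v (diag_mat s *v x))"
  shows "norm w \<le> H / k * norm x"
proof -
  define z where "z = diag_mat s *v x - k *\<^sub>R w"
  define y where "y = Sg *v z"
  have "diag_mat s *v y = diag_mat s *v (Sg *v (diag_mat s *v x)) - k *\<^sub>R (diag_mat s *v (Sg *v w))"
    unfolding y_def z_def by (simp add: matrix_vector_mult_diff_distrib matrix_vector_mult_scaleR)
  also have "\<dots> = w" using eq by (simp add: algebra_simps)
  finally have wy: "\<And>i. w$i = s$i * y$i" by (simp add: diag_mv vec_eq_iff)
  have zy: "\<And>i. s$i * x$i = z$i + k * s$i * y$i"
    using wy by (simp add: z_def diag_mv)
  have zy0: "(\<Sum>i\<in>UNIV. z$i * y$i) \<ge> 0" using psd[rule_format, of z] by (simp add: y_def inner_vec_sum)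
  have H0: "H > 0" using spos sH by (meson less_le_trans)
  have A: "(\<Sum>i\<in>UNIV. s$i * (x$i)^2) \<ge> k^2 * (\<Sum>i\<in>UNIV. s$i * (y$i)^2)"
  proof -
    have "(\<Sum>i\<in>UNIV. s$i * (x$i)^2) \<ge> (\<Sum>i\<in>UNIV. 2 * k * z$i * y$i + k^2 * s$i * (y$i)^2)"
      by (rule sum_mono) (use pointwise_key spos zy in blast)
    also have "(\<Sum>i\<in>UNIV. 2 * k * z$i * y$i + k^2 * s$i * (y$i)^2)
        = 2 * k * (\<Sum>i\<in>UNIV. z$i * y$i) + k^2 * (\<Sum>i\<in>UNIV. s$i * (y$i)^2)"
      by (simp add: sum.distrib sum_distrib_left mult_ac)
    finally have "(\<Sum>i\<in>UNIV. s$i * (x$i)^2) \<ge> 2 * k * (\<Sum>i\<in>UNIV. z$i * y$i) + k^2 * (\<Sum>i\<in>UNIV. s$i * (y$i)^2)" .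
    moreover have "2 * k * (\<Sum>i\<in>UNIV. z$i * y$i) \<ge> 0" using zy0 k by simp
    ultimately show ?thesis by linarith
  qed
  have B: "norm w ^ 2 \<le> H * (\<Sum>i\<in>UNIV. s$i * (y$i)^2)"
  proof -
    have "norm w ^ 2 = (\<Sum>i\<in>UNIV. s$i * (s$i * (y$i)^2))"
      unfolding norm_sq_sum by (rule sum.cong) (simp_all add: wy power2_eq_square)
    also have "\<dots> \<le> (\<Sum>i\<in>UNIV. H * (s$i * (y$i)^2))"
      by (rule sum_mono) (use spos sH in \<open>auto intro!: mult_right_mono\<close>)
    finally show ?thesis by (simp add: sum_distrib_left)
  qed
  have C: "(\<Sum>i\<in>UNIV. s$i * (x$i)^2) \<le> H * norm x ^ 2"
  proof -
    have "(\<Sum>i\<in>UNIV. s$i * (x$i)^2) \<le> (\<Sum>i\<in>UNIV. H * (x$i)^2)"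
      by (rule sum_mono) (use sH in \<open>auto intro!: mult_right_mono\<close>)
    then show ?thesis by (simp add: norm_sq_sum sum_distrib_left)
  qed
  have "k^2 * norm w ^ 2 \<le> H^2 * norm x ^ 2"
  proof -
    have "k^2 * norm w ^ 2 \<le> H * (k^2 * (\<Sum>i\<in>UNIV. s$i * (y$i)^2))"
      using B k by (simp add: mult_left_mono mult_ac)
    also have "\<dots> \<le> H * (H * norm x ^ 2)"
      using A C H0 by (intro mult_left_mono) auto
    finally show ?thesis by (simp add: power2_eq_square mult_ac)
  qed
  then have "(k * norm w)^2 \<le> (H * norm x)^2" by (simp add: power_mult_distrib)
  moreover have "0 \<le> H * norm x" using H0 by simp
  ultimately have "k * norm w \<le> H * norm x" by (rule power2_le_imp_le)
  then show ?thesis using k by (simp add: field_simps)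
qed

lemma matrix_inv_unique:
  fixes A B :: "real^'n^'n"
  assumes "A ** B = mat 1" "B ** A = mat 1"
  shows "matrix_inv A = B"
proof -
  have "\<exists>A'. A ** A' = mat 1 \<and> A' ** A = mat 1" using assms by blast
  then have Mi: "A ** matrix_inv A = mat 1 \<and> matrix_inv A ** A = mat 1"
    unfolding matrix_inv_def by (rule someI_ex)
  have "B = B ** (A ** matrix_inv A)" using Mi by simp
  also have "\<dots> = (B ** A) ** matrix_inv A" by (simp add: matrix_mul_assoc)
  also have "\<dots> = matrix_inv A" using assms by simp
  finally show ?thesis by simp
qed

lemma matrix_inv_right:
  fixes A :: "real^'n^'n"
  assumes "invertible A"
  shows "A ** matrix_inv A = mat 1"
proof -
  have "\<exists>A'. A ** A' = mat 1 \<and> A' ** A = mat 1" using assms unfolding invertible_def by blast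
  then have "A ** matrix_inv A = mat 1 \<and> matrix_inv A ** A = mat 1"
    unfolding matrix_inv_def by (rule someI_ex)
  then show ?thesis by simp
qed

lemma mat1_diag: "(mat 1 :: real^'n^'n) = diag_mat (\<chi> i. 1)"
  by (simp add: mat_def diag_mat_def vec_eq_iff)

lemma sup_norm2_ge:
  assumes "bounded (range (\<lambda>p. h (fst p) (snd p)))"
  shows "\<bar>h a b\<bar> \<le> sup_norm2 h"
proof -
  obtain B where B: "\<forall>y\<in>range (\<lambda>p. h (fst p) (snd p)). \<bar>y\<bar> \<le> B"
    using assms bounded_real by blast
  have bdd: "bdd_above ((\<lambda>p. \<bar>h (fst p) (snd p)\<bar>) ` UNIV)"
    using B by (auto intro!: bdd_aboveI[where M=B])
  have "\<bar>h (fst (a,b)) (snd (a,b))\<bar> \<le> (SUP p\<in>UNIV. \<bar>h (fst p) (snd p)\<bar>)"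
    by (rule cSUP_upper[OF _ bdd]) simp
  then show ?thesis by (simp add: sup_norm2_def)
qed

theorem lemma2:
  fixes \<mu> :: "real^'n"
    and A B C \<Sigma>0 :: "real^'n^'n"
    and Z R S :: "nat \<Rightarrow> real^'n"
    and \<Sigma> :: "nat \<Rightarrow> real^'n^'n"
    and h :: "real \<Rightarrow> real \<Rightarrow> real"
    and q :: "real^'n \<Rightarrow> real^'n^'n \<Rightarrow> real"
    and \<gamma> \<epsilon> s_low chi :: real
  assumes Sigma0_pd: "pos_def \<Sigma>0"
    and S0_pos: "\<forall>i. S 0 $ i > 0"
    and R_def: "\<forall>t. R (Suc t) = \<mu> + Z (Suc t)"
    and Sigma_init: "\<Sigma> 0 = \<Sigma>0"
    and Sigma_rec: "\<forall>t. \<Sigma> (Suc t) = C ** transpose C + A ** \<Sigma> t ** transpose A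
                         + B ** outer (Z (Suc t)) (Z (Suc t)) ** transpose B"
    and S_rec: "\<forall>t i. S (Suc t) $ i = h (S t $ i) (R (Suc t) $ i)"
    and gamma_pos: "\<gamma> > 0" and eps_pos: "\<epsilon> > 0"
    and C_full_rank: "rank C = CARD('n)"
    and h_bdd: "bounded (range (\<lambda>p. h (fst p) (snd p)))"
    and s_low_pos: "s_low > 0"
    and h_lower: "\<forall>s r. h s r \<ge> s_low"
    and q_bounds: "\<forall>s p. 1 \<le> q s p \<and> q s p \<le> chi"
  shows "\<forall>t\<ge>1.
     let \<Psi> = diag_mat (S t);
         P = \<Psi> ** \<Sigma> t ** \<Psi>;
         Pt = (\<gamma> / (\<epsilon> * q (S t) P)) *\<^sub>R P
     in opnorm ((1 / (\<epsilon> * q (S t) P)) *\<^sub>R matrix_inv \<Psi>) \<le> 1 / (\<epsilon> * s_low)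
      \<and> opnorm (matrix_inv (mat 1 + Pt ** matrix_inv \<Psi>) ** P)
          \<le> \<epsilon> / \<gamma> * chi * sup_norm2 h"
proof (intro allI impI)
  fix t :: nat assume "t \<ge> 1"
  then obtain t' where t: "t = Suc t'" by (cases t) auto
  define Hh where "Hh = sup_norm2 h"
  define s where "s = S t"
  have psd_all: "\<forall>z. z \<bullet> (\<Sigma> u *v z) \<ge> 0" for u
  proof (induction u)
    case 0
    show ?case
    proof
      fix z :: "real^'n"
      show "z \<bullet> (\<Sigma> 0 *v z) \<ge> 0"
        using Sigma0_pd Sigma_init unfolding pos_def_def
        by (cases "z = 0") (auto intro: less_imp_le)
    qed
  next
    case (Suc u)
    then show ?case using psd_step[OF Suc] Sigma_rec by metis
  qed
  have s_low_le: "s_low \<le> s$i" for i using h_lower S_rec t s_def by simp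
  have s_pos: "\<forall>i. 0 < s$i" using s_low_le s_low_pos by (meson less_le_trans)
  have s_H: "\<forall>i. s$i \<le> Hh"
    using S_rec t s_def sup_norm2_ge[OF h_bdd] Hh_def by (metis abs_ge_self order_trans)
  have Hh0: "Hh \<ge> 0" using s_H s_pos by (meson less_le_trans less_imp_le)
  define \<Psi> where "\<Psi> = diag_mat s"
  define D where "D = diag_mat (\<chi> i. 1 / s$i)"
  have e1: "(\<chi> i. s$i * (\<chi> i. 1 / s$i) $ i) = (\<chi> i. (1::real))"
    using s_pos by (simp add: vec_eq_iff less_imp_neq[symmetric])
  have e2: "(\<chi> i. (\<chi> i. 1 / s$i) $ i * s$i) = (\<chi> i. (1::real))"
    using s_pos by (simp add: vec_eq_iff less_imp_neq[symmetric])
  have PD: "\<Psi> ** D = mat 1" "D ** \<Psi> = mat 1"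
    unfolding \<Psi>_def D_def diag_mm mat1_diag by (simp only: e1, simp only: e2)
  have invPsi: "matrix_inv \<Psi> = D" by (rule matrix_inv_unique[OF PD])
  define P where "P = \<Psi> ** \<Sigma> t ** \<Psi>"
  define qq where "qq = q (S t) P"
  have qq: "1 \<le> qq" "qq \<le> chi" using q_bounds qq_def by auto
  define k where "k = \<gamma> / (\<epsilon> * qq)"
  have k0: "k > 0" using gamma_pos eps_pos qq by (simp add: k_def)
  have c1: "opnorm ((1 / (\<epsilon> * qq)) *\<^sub>R D) \<le> 1 / (\<epsilon> * s_low)"
  proof -
    have eq: "(1 / (\<epsilon> * qq)) *\<^sub>R D = diag_mat (\<chi> i. 1 / (\<epsilon> * qq) / s$i)"
      by (simp add: D_def diag_mat_def vec_eq_iff)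
    have b: "\<bar>(\<chi> i. 1 / (\<epsilon> * qq) / s$i) $ i\<bar> \<le> 1 / (\<epsilon> * s_low)" for i
    proof -
      have "\<bar>1 / (\<epsilon> * qq) / s$i\<bar> = 1 / (\<epsilon> * qq * s$i)"
      proof -
        have "\<epsilon> * qq * s$i > 0" using eps_pos qq s_pos by simp
        then show ?thesis by simp
      qed
      also have "\<dots> \<le> 1 / (\<epsilon> * s_low)"
      proof (rule divide_left_mono)
        have "\<epsilon> * s_low \<le> \<epsilon> * s$i" using s_low_le eps_pos by simp
        also have "\<dots> \<le> \<epsilon> * qq * s$i"
        proof -
          have "\<epsilon> * s$i > 0" using eps_pos s_pos by simp
          then have "(\<epsilon> * s$i) * 1 \<le> (\<epsilon> * s$i) * qq" using qq by (intro mult_left_mono) auto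
          then show ?thesis by (simp add: mult_ac)
        qed
        finally show "\<epsilon> * s_low \<le> \<epsilon> * qq * s$i" .
      qed (use eps_pos s_low_pos qq s_pos[rule_format, of i] in \<open>simp_all add: zero_less_mult_iff\<close>)
      finally show ?thesis by simp
    qed
    show ?thesis unfolding opnorm_def eq
      by (rule onorm_le, rule diag_norm_le[OF b]) (use eps_pos s_low_pos in simp)
  qed
  define M where "M = mat 1 + (k *\<^sub>R P) ** D"
  have Mv: "M *v w = w + k *\<^sub>R (\<Psi> *v (\<Sigma> t *v w))" for w
  proof -
    have "\<Psi> *v (D *v w) = w" using PD by (simp add: matrix_vector_mul_assoc)
    then have "P *v (D *v w) = \<Psi> *v (\<Sigma> t *v w)"
      by (simp add: P_def matrix_vector_mul_assoc[symmetric])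
    then show ?thesis
      by (simp add: M_def matrix_vector_mult_add_rdistrib matrix_vector_mul_assoc[symmetric]
          scaleR_matrix_vector_assoc[symmetric])
  qed
  have Pv: "P *v x = \<Psi> *v (\<Sigma> t *v (\<Psi> *v x))" for x
    by (simp add: P_def matrix_vector_mul_assoc matrix_mul_assoc)
  have keyM: "M *v w = P *v x \<Longrightarrow> norm w \<le> Hh / k * norm x" for w x
    using key[OF s_pos s_H psd_all[of t] k0, where w=w and x=x] Mv Pv by (simp add: \<Psi>_def)
  have "invertible M"
  proof -
    have "\<forall>w. M *v w = 0 \<longrightarrow> w = 0"
    proof (intro allI impI)
      fix w assume "M *v w = 0"
      then have "M *v w = P *v 0" by simp
      then have "norm w \<le> 0" using keyM by fastforce
      then show "w = 0" by simp
    qed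
    then show ?thesis using matrix_left_invertible_ker invertible_left_inverse by blast
  qed
  then have MMi: "M ** matrix_inv M = mat 1" by (rule matrix_inv_right)
  have c2: "opnorm (matrix_inv M ** P) \<le> \<epsilon> / \<gamma> * chi * Hh"
    unfolding opnorm_def
  proof (rule onorm_le)
    fix x
    define w where "w = matrix_inv M *v (P *v x)"
    have "M *v w = P *v x" by (simp only: w_def matrix_vector_mul_assoc[of M "matrix_inv M"] MMi matrix_vector_mul_lid)
    then have "norm w \<le> Hh / k * norm x" by (rule keyM)
    also have "Hh / k = \<epsilon> * qq / \<gamma> * Hh" using eps_pos gamma_pos qq by (simp add: k_def)
    also have "\<dots> \<le> \<epsilon> / \<gamma> * chi * Hh"
      using eps_pos gamma_pos qq Hh0 by (simp add: mult_right_mono divide_right_mono)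
    finally have "norm w \<le> \<epsilon> / \<gamma> * chi * Hh * norm x"
      by (simp add: mult_right_mono)
    then show "norm ((matrix_inv M ** P) *v x) \<le> \<epsilon> / \<gamma> * chi * Hh * norm x"
      by (simp add: w_def matrix_vector_mul_assoc)
  qed
  show "let \<Psi> = diag_mat (S t);
         P = \<Psi> ** \<Sigma> t ** \<Psi>;
         Pt = (\<gamma> / (\<epsilon> * q (S t) P)) *\<^sub>R P
     in opnorm ((1 / (\<epsilon> * q (S t) P)) *\<^sub>R matrix_inv \<Psi>) \<le> 1 / (\<epsilon> * s_low)
      \<and> opnorm (matrix_inv (mat 1 + Pt ** matrix_inv \<Psi>) ** P)
          \<le> \<epsilon> / \<gamma> * chi * sup_norm2 h"
  proof -
    have invPsi': "matrix_inv (diag_mat (S t)) = D" using invPsi by (simp add: \<Psi>_def s_def)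
    show ?thesis
      using c1 c2 unfolding Let_def invPsi' qq_def k_def M_def P_def \<Psi>_def s_def Hh_def
      by simp
  qed
qed

end
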